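(* Suppose the $L$-smoothness assumption holds and let $\{w_t\}_{t\ge0}$, $\{v_t\}_{t\ge0}$, $\{\hat D_t\}_{t\ge0}$ be generated by {\tt Scaled SARAH} with any step-size $\eta>0$. Then for every $t\ge0$, $$P(w_{t+1})\le P(w_t)+\frac{\eta}{2\alpha}\|\nabla P(w_t)-v_t\|^2-\left(\frac1{2\eta}-\frac{L}{2\alpha}\right)\|w_{t+1}-w_t\|^2_{\hat D_t}-\frac{\eta}{2}\|\nabla P(w_t)\|^2_{\hat D_t^{-1}}.$$
   Context: $P=\frac1n\sum_{i=1}^nf_i$ with $f_i:\mathbb{R}^d\to\mathbb{R}$. $L$-smoothness assumption: each $f_i$ and $P$ are twice differentiable with $L$-Lipschitz gradients. $\|x\|_D^2=x^TDx$ for positive definite $D$. For $J\subseteq[n]$, $\nabla^2P_J(w)=\frac1{|J|}\sum_{j\in J}\nabla^2 f_j(w)$; $\odot$ is the Hadamard product; $\mathrm{diag}(x)$ is the diagonal matrix with the entries of $x$. Preconditioner (parameters $\alpha>0$, $\beta\in(0,1)$, $m\ge1$): $D_0=\frac1m\sum_{j=1}^m\mathrm{diag}(z_j\odot\nabla^2P_{\mathcal{J}_j}(w_0)z_j)$, $D_t=\beta D_{t-1}+(1-\beta)\mathrm{diag}(z_t\odot\nabla^2P_{\mathcal{J}_t}(w_t)z_t)$ for $t\ge1$, with independent Rademacher vectors $z$ and random index sets $\mathcal{J}\subseteq[n]$; $\hat D_t$ diagonal with $(\hat D_t)_{ii}=\max\{\alpha,|(D_t)_{ii}|\}$. {\tt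 Scaled SARAH} (input $w_0$, $\eta$, $p\in(0,1]$): $v_0=\nabla P(w_0)$; for $t\ge0$: $w_{t+1}=w_t-\eta\hat D_t^{-1}v_t$; draw $i_{t+1}$ uniformly from $[n]$; with probability $p$, $v_{t+1}=\nabla P(w_{t+1})$, otherwise $v_{t+1}=v_t+\nabla f_{i_{t+1}}(w_{t+1})-\nabla f_{i_{t+1}}(w_t)$; update $\hat D_{t+1}$. *)

theory Defs
  imports "HOL-Analysis.Analysis"
begin

definition Pfun :: "nat \<Rightarrow> (nat \<Rightarrow> real^'d \<Rightarrow> real) \<Rightarrow> real^'d \<Rightarrow> real" where
  "Pfun n f w = (1 / real n) * (\<Sum>i<n. f i w)"

definition gradP :: "nat \<Rightarrow> (nat \<Rightarrow> real^'d \<Rightarrow> real^'d) \<Rightarrow> real^'d \<Rightarrow> real^'d" where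
  "gradP n g w = (1 / real n) *\<^sub>R (\<Sum>i<n. g i w)"

definition hessJ :: "(nat \<Rightarrow> real^'d \<Rightarrow> real^'d^'d) \<Rightarrow> nat set \<Rightarrow> real^'d \<Rightarrow> real^'d^'d" where
  "hessJ H J w = (1 / real (card J)) *\<^sub>R (\<Sum>j\<in>J. H j w)"

definition hadamard :: "real^'d \<Rightarrow> real^'d \<Rightarrow> real^'d" where
  "hadamard x y = (\<chi> i. x $ i * y $ i)"

text \<open>Diagonal matrices are represented by the vector of their diagonal entries.
  Clipped preconditioner: (hat D)_ii = max alpha |D_ii|.\<close>
definition clipD :: "real \<Rightarrow> real^'d \<Rightarrow> real^'d" where
  "clipD \<alpha> D = (\<chi> i. max \<alpha> \<bar>D $ i\<bar>)"

definition diag_inv_apply :: "real^'d \<Rightarrow> real^'d \<Rightarrow> real^'d" where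
  "diag_inv_apply D x = (\<chi> i. x $ i / D $ i)"

definition wnorm_sq :: "real^'d \<Rightarrow> real^'d \<Rightarrow> real" where
  "wnorm_sq D x = (\<Sum>i\<in>UNIV. D $ i * (x $ i)\<^sup>2)"

definition wnorm_inv_sq :: "real^'d \<Rightarrow> real^'d \<Rightarrow> real" where
  "wnorm_inv_sq D x = (\<Sum>i\<in>UNIV. (x $ i)\<^sup>2 / D $ i)"

definition rademacher :: "real^'d \<Rightarrow> bool" where
  "rademacher z \<longleftrightarrow> (\<forall>i. z $ i = 1 \<or> z $ i = -1)"

end

theory Submission
  imports Defs
begin

lemma descent:
  fixes P :: "real^'d \<Rightarrow> real" and G :: "real^'d \<Rightarrow> real^'d"
  assumes dP: "\<And>x. (P has_derivative (\<lambda>h. G x \<bullet> h)) (at x)"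
    and lip: "\<And>x y. norm (G x - G y) \<le> L * norm (x - y)"
  shows "P (x + d) \<le> P x + G x \<bullet> d + L / 2 * (norm d)\<^sup>2"
proof -
  define \<phi> where "\<phi> s = P (x + s *\<^sub>R d) - s * (G x \<bullet> d) - L / 2 * s^2 * (norm d)\<^sup>2" for s :: real
  have "\<phi> 1 \<le> \<phi> 0"
  proof (rule DERIV_nonpos_imp_nonincreasing[of 0 1])
    fix s :: real assume s: "0 \<le> s" "s \<le> 1"
    have l: "((\<lambda>s. x + s *\<^sub>R d) has_derivative (\<lambda>h. h *\<^sub>R d)) (at s)"
      by (auto intro!: derivative_eq_intros)
    have c: "((\<lambda>s. P (x + s *\<^sub>R d)) has_derivative (\<lambda>h. G (x + s *\<^sub>R d) \<bullet> (h *\<^sub>R d))) (at s)"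
      using has_derivative_compose[OF l dP] by (simp add: o_def)
    have c2: "((\<lambda>s. P (x + s *\<^sub>R d)) has_real_derivative (G (x + s *\<^sub>R d) \<bullet> d)) (at s)"
      unfolding has_field_derivative_def using c by (simp add: mult.commute[of _ "G (x + s *\<^sub>R d) \<bullet> d"])
    have D: "(\<phi> has_real_derivative (G (x + s *\<^sub>R d) \<bullet> d - G x \<bullet> d - L / 2 * (2 * s) * (norm d)\<^sup>2)) (at s)"
      unfolding \<phi>_def[abs_def]
      by (rule derivative_eq_intros c2 | simp)+
    have "G (x + s *\<^sub>R d) \<bullet> d - G x \<bullet> d = (G (x + s *\<^sub>R d) - G x) \<bullet> d"
      by (simp add: inner_diff_left)
    also have "\<dots> \<le> norm (G (x + s *\<^sub>R d) - G x) * norm d" by (rule norm_cauchy_schwarz)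
    also have "\<dots> \<le> L * norm (s *\<^sub>R d) * norm d"
      using lip[of "x + s *\<^sub>R d" x] by (simp add: mult_right_mono)
    also have "\<dots> = L * s * (norm d)\<^sup>2" using s by (simp add: power2_eq_square)
    finally show "\<exists>y. (\<phi> has_real_derivative y) (at s) \<and> y \<le> 0"
      using D by (intro exI[of _ "G (x + s *\<^sub>R d) \<bullet> d - G x \<bullet> d - L / 2 * (2 * s) * (norm d)\<^sup>2"]) auto
  qed simp
  then show ?thesis unfolding \<phi>_def by simp
qed

lemma coord:
  fixes a g v L \<eta> \<alpha> :: real
  assumes a: "\<alpha> \<le> a" "0 < \<alpha>" and L: "0 \<le> L" and e: "0 < \<eta>"
  shows "g * (-(\<eta> * v / a)) + L/2 * (-(\<eta> * v / a))^2 \<le> \<eta>/(2*\<alpha>) * (g - v)^2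
     - (1/(2*\<eta>) - L/(2*\<alpha>)) * (a * (-(\<eta> * v / a))^2) - \<eta>/2 * (g^2 / a)"
proof -
  have ap: "a > 0" using a by simp
  have h1: "\<eta>/(2*a) * (g-v)^2 \<le> \<eta>/(2*\<alpha>) * (g-v)^2"
    by (rule mult_right_mono) (use a e in \<open>auto intro!: divide_left_mono\<close>)
  have h2: "L * \<eta>^2 * v^2 / (2*a^2) \<le> L * \<eta>^2 * v^2 / (2*\<alpha>*a)"
    by (rule divide_left_mono) (use a L ap in \<open>auto simp: power2_eq_square intro!: mult_right_mono\<close>)
  have lhs: "g * (-(\<eta> * v / a)) + L/2 * (-(\<eta> * v / a))^2 = \<eta>/(2*a) * (g-v)^2 - \<eta>/(2*a) * v^2 - \<eta>/(2*a) * g^2 + L * \<eta>^2 * v^2 / (2*a^2)"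
    using ap by (simp add: field_simps power2_eq_square)
  have rhs: "\<eta>/(2*\<alpha>) * (g - v)^2
     - (1/(2*\<eta>) - L/(2*\<alpha>)) * (a * (-(\<eta> * v / a))^2) - \<eta>/2 * (g^2 / a) =
     \<eta>/(2*\<alpha>) * (g - v)^2 - \<eta>/(2*a) * v^2 + L * \<eta>^2 * v^2 / (2*\<alpha>*a) - \<eta>/(2*a) * g^2"
    using ap e a by (simp add: field_simps power2_eq_square)
  show ?thesis unfolding lhs rhs using h1 h2 by linarith
qed

theorem lemma2:
  fixes n m :: nat
    and f :: "nat \<Rightarrow> real^'d \<Rightarrow> real"
    and g :: "nat \<Rightarrow> real^'d \<Rightarrow> real^'d"
    and H :: "nat \<Rightarrow> real^'d \<Rightarrow> real^'d^'d"
    and L \<alpha> \<beta> \<eta> p :: real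
    and w v D :: "nat \<Rightarrow> real^'d"
    and z0 :: "nat \<Rightarrow> real^'d" and J0 :: "nat \<Rightarrow> nat set"
    and z :: "nat \<Rightarrow> real^'d" and J :: "nat \<Rightarrow> nat set"
    and idx :: "nat \<Rightarrow> nat" and coin :: "nat \<Rightarrow> bool"
  assumes n_pos: "n \<ge> 1"
    and grad_f: "\<And>i x. i < n \<Longrightarrow> (f i has_derivative (\<lambda>h. g i x \<bullet> h)) (at x)"
    and hess_f: "\<And>i x. i < n \<Longrightarrow> (g i has_derivative (\<lambda>h. H i x *v h)) (at x)"
    and lip_f: "\<And>i x y. i < n \<Longrightarrow> norm (g i x - g i y) \<le> L * norm (x - y)"
    and grad_P: "\<And>x. (Pfun n f has_derivative (\<lambda>h. gradP n g x \<bullet> h)) (at x)"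
    and hess_P: "\<And>x. (gradP n g has_derivative
                   (\<lambda>h. ((1 / real n) *\<^sub>R (\<Sum>i<n. H i x)) *v h)) (at x)"
    and lip_P: "\<And>x y. norm (gradP n g x - gradP n g y) \<le> L * norm (x - y)"
    and \<alpha>_pos: "\<alpha> > 0" and \<beta>_range: "0 < \<beta>" "\<beta> < 1" and m_pos: "m \<ge> 1"
    and p_range: "0 < p" "p \<le> 1"
    and \<eta>_pos: "\<eta> > 0"
    and z0_rad: "\<And>j. rademacher (z0 j)"
    and J0_sub: "\<And>j. J0 j \<subseteq> {..<n} \<and> J0 j \<noteq> {}"
    and z_rad: "\<And>t. rademacher (z t)"
    and J_sub: "\<And>t. J t \<subseteq> {..<n} \<and> J t \<noteq> {}"
    and idx_range: "\<And>t. idx t < n"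
    and D0: "D 0 = (1 / real m) *\<^sub>R
               (\<Sum>j\<in>{1..m}. hadamard (z0 j) (hessJ H (J0 j) (w 0) *v z0 j))"
    and D_step: "\<And>t. D (Suc t) = \<beta> *\<^sub>R D t + (1 - \<beta>) *\<^sub>R
               hadamard (z (Suc t)) (hessJ H (J (Suc t)) (w (Suc t)) *v z (Suc t))"
    and v0: "v 0 = gradP n g (w 0)"
    and w_step: "\<And>t. w (Suc t) = w t - \<eta> *\<^sub>R diag_inv_apply (clipD \<alpha> (D t)) (v t)"
    and v_step: "\<And>t. v (Suc t) = (if coin (Suc t) then gradP n g (w (Suc t))
               else v t + g (idx (Suc t)) (w (Suc t)) - g (idx (Suc t)) (w t))"
  shows "\<forall>t. Pfun n f (w (Suc t)) \<le> Pfun n f (w t)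
           + \<eta> / (2 * \<alpha>) * (norm (gradP n g (w t) - v t))\<^sup>2
           - (1 / (2 * \<eta>) - L / (2 * \<alpha>)) * wnorm_sq (clipD \<alpha> (D t)) (w (Suc t) - w t)
           - \<eta> / 2 * wnorm_inv_sq (clipD \<alpha> (D t)) (gradP n g (w t))"
  
proof
  fix t
  define a where "a = clipD \<alpha> (D t)"
  define gg where "gg = gradP n g (w t)"
  define vv where "vv = v t"
  define dd where "dd = w (Suc t) - w t"
  have aa: "\<And>i. \<alpha> \<le> a $ i" unfolding a_def clipD_def by simp
  have ddi: "\<And>i. dd $ i = -(\<eta> * vv $ i / a $ i)"
    unfolding dd_def w_step vv_def diag_inv_apply_def a_def by simp
  have L0: "0 \<le> L"
  proof -
    obtain i :: 'd where True by simp
    have "0 < norm (axis i (1::real))" by simp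
    moreover have "0 \<le> L * norm (0 - axis i (1::real))"
      using lip_P[of 0 "axis i 1"] norm_ge_zero order_trans by blast
    ultimately show ?thesis by (simp add: zero_le_mult_iff)
  qed
  have desc: "Pfun n f (w t + dd) \<le> Pfun n f (w t) + gg \<bullet> dd + L / 2 * (norm dd)\<^sup>2"
    unfolding gg_def by (rule descent[OF grad_P lip_P])
  have key: "\<And>i. gg $ i * dd $ i + L/2 * (dd $ i)^2 \<le> \<eta>/(2*\<alpha>) * (gg $ i - vv $ i)^2
     - (1/(2*\<eta>) - L/(2*\<alpha>)) * (a $ i * (dd $ i)^2) - \<eta>/2 * ((gg $ i)^2 / a $ i)"
    unfolding ddi by (rule coord[OF aa \<alpha>_pos L0 \<eta>_pos])
  have "gg \<bullet> dd + L / 2 * (norm dd)\<^sup>2 = (\<Sum>i\<in>UNIV. gg $ i * dd $ i + L/2 * (dd $ i)^2)"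
  proof -
    have n2: "(norm dd)\<^sup>2 = (\<Sum>i\<in>UNIV. (dd $ i)^2)"
      unfolding power2_norm_eq_inner inner_vec_def by (simp add: power2_eq_square)
    show ?thesis unfolding n2 by (simp add: inner_vec_def sum.distrib sum_distrib_left)
  qed
  also have "\<dots> \<le> (\<Sum>i\<in>UNIV. \<eta>/(2*\<alpha>) * (gg $ i - vv $ i)^2
     - (1/(2*\<eta>) - L/(2*\<alpha>)) * (a $ i * (dd $ i)^2) - \<eta>/2 * ((gg $ i)^2 / a $ i))"
    by (rule sum_mono) (rule key)
  also have "\<dots> = \<eta> / (2 * \<alpha>) * (norm (gg - vv))\<^sup>2
           - (1 / (2 * \<eta>) - L / (2 * \<alpha>)) * wnorm_sq a dd
           - \<eta> / 2 * wnorm_inv_sq a gg"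
  proof -
    have n2: "(norm (gg - vv))\<^sup>2 = (\<Sum>i\<in>UNIV. (gg $ i - vv $ i)^2)"
      unfolding power2_norm_eq_inner inner_vec_def by (simp add: power2_eq_square)
    show ?thesis unfolding n2 by (simp add: sum_subtractf sum_distrib_left wnorm_sq_def wnorm_inv_sq_def)
  qed
  finally show "Pfun n f (w (Suc t)) \<le> Pfun n f (w t)
           + \<eta> / (2 * \<alpha>) * (norm (gradP n g (w t) - v t))\<^sup>2
           - (1 / (2 * \<eta>) - L / (2 * \<alpha>)) * wnorm_sq (clipD \<alpha> (D t)) (w (Suc t) - w t)
           - \<eta> / 2 * wnorm_inv_sq (clipD \<alpha> (D t)) (gradP n g (w t))"
    using desc unfolding gg_def vv_def a_def dd_def by simp
qed

end
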